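(* A regular Hausdorff space $X$ is a $\gamma$-space if and only if $\mathcal{F}(X)$ is a $\gamma$-space.
   Context: $\mathcal{F}(X)$ is the set of nonempty finite subsets of $X$ with the Vietoris topology (base: $\langle U_1,\dots,U_k\rangle=\{A: A\subset\bigcup_i U_i,\ A\cap U_j\neq\emptyset\ \forall j\}$, $U_i$ open in $X$). A space $(Y,\tau_Y)$ is a $\gamma$-space if there is a function $g:\omega\times Y\to\tau_Y$ such that (i) $\{g(n,x): n\in\omega\}$ is a neighborhood base at $x$ for each $x\in Y$, and (ii) for each $n\in\omega$ and $x\in Y$ there is $m\in\omega$ such that $y\in g(m,x)$ implies $g(n,y)\subset g(n,x)$. *)

theory Defs
  imports "HOL-Analysis.Analysis"
begin

definition vietoris_basic :: "'a topology \<Rightarrow> 'a set set \<Rightarrow> 'a set set" where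
  "vietoris_basic X \<U> =
     {A. finite A \<and> A \<noteq> {} \<and> A \<subseteq> topspace X \<and> A \<subseteq> \<Union>\<U> \<and> (\<forall>U\<in>\<U>. A \<inter> U \<noteq> {})}"

definition fin_vietoris :: "'a topology \<Rightarrow> 'a set topology" where
  "fin_vietoris X = topology_generated_by
     {vietoris_basic X \<U> | \<U>. finite \<U> \<and> \<U> \<noteq> {} \<and> (\<forall>U\<in>\<U>. openin X U)}"

definition gamma_space :: "'b topology \<Rightarrow> bool" where
  "gamma_space Y \<longleftrightarrow> (\<exists>g :: nat \<Rightarrow> 'b \<Rightarrow> 'b set.
     (\<forall>n. \<forall>x\<in>topspace Y. openin Y (g n x) \<and> x \<in> g n x) \<and>
     (\<forall>x\<in>topspace Y. \<forall>U. openin Y U \<and> x \<in> U \<longrightarrow> (\<exists>n. g n x \<subseteq> U)) \<and>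
     (\<forall>n. \<forall>x\<in>topspace Y. \<exists>m. \<forall>y\<in>g m x. g n y \<subseteq> g n x))"

end

theory Submission
  imports Defs
begin

lemma topspace_fin_vietoris:
  "topspace (fin_vietoris X) = {A. finite A \<and> A \<noteq> {} \<and> A \<subseteq> topspace X}"
proof
  show "topspace (fin_vietoris X) \<subseteq> {A. finite A \<and> A \<noteq> {} \<and> A \<subseteq> topspace X}"
    unfolding fin_vietoris_def topology_generated_by_topspace vietoris_basic_def by auto
next
  show "{A. finite A \<and> A \<noteq> {} \<and> A \<subseteq> topspace X} \<subseteq> topspace (fin_vietoris X)"
  proof
    fix A assume A: "A \<in> {A. finite A \<and> A \<noteq> {} \<and> A \<subseteq> topspace X}"
    have "A \<in> vietoris_basic X {topspace X}" using A unfolding vietoris_basic_def by auto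
    moreover have "vietoris_basic X {topspace X} \<in> {vietoris_basic X \<U> | \<U>. finite \<U> \<and> \<U> \<noteq> {} \<and> (\<forall>U\<in>\<U>. openin X U)}"
      by auto
    ultimately show "A \<in> topspace (fin_vietoris X)"
      unfolding fin_vietoris_def topology_generated_by_topspace by blast
  qed
qed

lemma openin_fin_vietoris_basic:
  assumes "finite \<U>" "\<U> \<noteq> {}" "\<forall>U\<in>\<U>. openin X U"
  shows "openin (fin_vietoris X) (vietoris_basic X \<U>)"
  unfolding fin_vietoris_def
  by (rule topology_generated_by_Basis) (use assms in auto)

lemma mem_vb: "B \<in> vietoris_basic X \<U> \<longleftrightarrow>
   finite B \<and> B \<noteq> {} \<and> B \<subseteq> topspace X \<and> B \<subseteq> \<Union>\<U> \<and> (\<forall>U\<in>\<U>. B \<inter> U \<noteq> {})"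
  by (simp add: vietoris_basic_def)

lemma vb_mono:
  assumes "\<And>a. a \<in> A \<Longrightarrow> f a \<subseteq> f' a"
  shows "vietoris_basic X (f ` A) \<subseteq> vietoris_basic X (f' ` A)"
proof
  fix B assume B: "B \<in> vietoris_basic X (f ` A)"
  then have B1: "finite B" "B \<noteq> {}" "B \<subseteq> topspace X" "B \<subseteq> (\<Union>a\<in>A. f a)" "\<forall>a\<in>A. B \<inter> f a \<noteq> {}"
    unfolding mem_vb by auto
  have "B \<subseteq> (\<Union>a\<in>A. f' a)" using B1(4) assms by blast
  moreover have "\<forall>a\<in>A. B \<inter> f' a \<noteq> {}" using B1(5) assms by blast
  ultimately show "B \<in> vietoris_basic X (f' ` A)" unfolding mem_vb using B1 by auto
qed

lemma gamma_mono:
  assumes "gamma_space X"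
  shows "\<exists>g :: nat \<Rightarrow> 'b \<Rightarrow> 'b set.
     (\<forall>n. \<forall>x\<in>topspace X. openin X (g n x) \<and> x \<in> g n x) \<and>
     (\<forall>x\<in>topspace X. \<forall>U. openin X U \<and> x \<in> U \<longrightarrow> (\<exists>n. g n x \<subseteq> U)) \<and>
     (\<forall>n. \<forall>x\<in>topspace X. \<exists>m. \<forall>y\<in>g m x. g n y \<subseteq> g n x) \<and>
     (\<forall>n m x. n \<le> m \<longrightarrow> g m x \<subseteq> g n x)"
proof -
  obtain g :: "nat \<Rightarrow> 'b \<Rightarrow> 'b set" where
    g1: "\<forall>n. \<forall>x\<in>topspace X. openin X (g n x) \<and> x \<in> g n x" and
    g2: "\<forall>x\<in>topspace X. \<forall>U. openin X U \<and> x \<in> U \<longrightarrow> (\<exists>n. g n x \<subseteq> U)" and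
    g3: "\<forall>n. \<forall>x\<in>topspace X. \<exists>m. \<forall>y\<in>g m x. g n y \<subseteq> g n x"
    using assms unfolding gamma_space_def by (elim exE conjE) (rule that; assumption)
  define mf where "mf n x = (SOME m. \<forall>y\<in>g m x. g n y \<subseteq> g n x)" for n x
  have mf: "\<forall>y\<in>g (mf n x) x. g n y \<subseteq> g n x" if "x \<in> topspace X" for n x
    unfolding mf_def by (rule someI_ex) (use g3 that in blast)
  define h where "h n x = (\<Inter>i\<in>{..n}. g i x)" for n x
  have "(\<forall>n. \<forall>x\<in>topspace X. openin X (h n x) \<and> x \<in> h n x)"
  proof (intro allI ballI conjI)
    fix n x assume x: "x \<in> topspace X"
    show "openin X (h n x)" unfolding h_def
      by (rule openin_Inter) (use g1 x in auto)
    show "x \<in> h n x" unfolding h_def using g1 x by auto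
  qed
  moreover have "\<forall>x\<in>topspace X. \<forall>U. openin X U \<and> x \<in> U \<longrightarrow> (\<exists>n. h n x \<subseteq> U)"
  proof (intro ballI allI impI)
    fix x U assume "x \<in> topspace X" "openin X U \<and> x \<in> U"
    then obtain n where "g n x \<subseteq> U" using g2 by blast
    then show "\<exists>n. h n x \<subseteq> U" unfolding h_def by blast
  qed
  moreover have "\<forall>n. \<forall>x\<in>topspace X. \<exists>m. \<forall>y\<in>h m x. h n y \<subseteq> h n x"
  proof (intro allI ballI)
    fix n x assume x: "x \<in> topspace X"
    define M where "M = (\<Sum>i\<le>n. mf i x)"
    have le: "mf i x \<le> M" if "i \<le> n" for i
      unfolding M_def using that by (intro member_le_sum) auto
    show "\<exists>m. \<forall>y\<in>h m x. h n y \<subseteq> h n x"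
    proof (intro exI[of _ M] ballI)
      fix y assume y: "y \<in> h M x"
      have "g i y \<subseteq> g i x" if "i \<le> n" for i
      proof -
        have "y \<in> g (mf i x) x" using y le[OF that] unfolding h_def by (simp add: atMost_iff)
        then show ?thesis using mf[OF x] by blast
      qed
      then show "h n y \<subseteq> h n x" unfolding h_def by blast
    qed
  qed
  moreover have "\<forall>n m x. n \<le> m \<longrightarrow> h m x \<subseteq> h n x" unfolding h_def by auto
  ultimately show ?thesis by (intro exI[of _ h]) (simp only:)
qed

lemma forward:
  assumes "gamma_space X"
  shows "gamma_space (fin_vietoris X)"
proof -
  obtain g :: "nat \<Rightarrow> 'a \<Rightarrow> 'a set" where
    g1: "\<forall>n. \<forall>x\<in>topspace X. openin X (g n x) \<and> x \<in> g n x" and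
    g2: "\<forall>x\<in>topspace X. \<forall>U. openin X U \<and> x \<in> U \<longrightarrow> (\<exists>n. g n x \<subseteq> U)" and
    g3: "\<forall>n. \<forall>x\<in>topspace X. \<exists>m. \<forall>y\<in>g m x. g n y \<subseteq> g n x" and
    g4: "\<forall>n m x. n \<le> m \<longrightarrow> g m x \<subseteq> g n x"
    using gamma_mono[OF assms] by (elim exE conjE) (rule that; assumption)
  define mf where "mf n x = (SOME m. \<forall>y\<in>g m x. g n y \<subseteq> g n x)" for n x
  have mf: "\<forall>y\<in>g (mf n x) x. g n y \<subseteq> g n x" if "x \<in> topspace X" for n x
    unfolding mf_def by (rule someI_ex) (use g3 that in blast)
  define G where "G n A = vietoris_basic X (g n ` A)" for n A
  note TS = topspace_fin_vietoris[of X]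
  have P1: "\<forall>n. \<forall>A\<in>topspace (fin_vietoris X). openin (fin_vietoris X) (G n A) \<and> A \<in> G n A"
  proof (intro allI ballI conjI)
    fix n A assume "A \<in> topspace (fin_vietoris X)"
    then have A: "finite A" "A \<noteq> {}" "A \<subseteq> topspace X" using TS by auto
    show "openin (fin_vietoris X) (G n A)" unfolding G_def
      by (rule openin_fin_vietoris_basic) (use A g1 in auto)
    show "A \<in> G n A" unfolding G_def mem_vb using A g1 by auto
  qed
  have P2: "\<forall>A\<in>topspace (fin_vietoris X). \<forall>W. openin (fin_vietoris X) W \<and> A \<in> W \<longrightarrow> (\<exists>n. G n A \<subseteq> W)"
  proof (intro ballI allI impI)
    fix A W assume A0: "A \<in> topspace (fin_vietoris X)" and W: "openin (fin_vietoris X) W \<and> A \<in> W"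
    have A: "finite A" "A \<noteq> {}" "A \<subseteq> topspace X" using A0 TS by auto
    have gen: "generate_topology_on {vietoris_basic X \<U> | \<U>. finite \<U> \<and> \<U> \<noteq> {} \<and> (\<forall>U\<in>\<U>. openin X U)} W"
      using W unfolding fin_vietoris_def by (simp add: openin_topology_generated_by_iff)
    have "\<forall>A. A \<in> W \<longrightarrow> finite A \<longrightarrow> A \<noteq> {} \<longrightarrow> A \<subseteq> topspace X \<longrightarrow> (\<exists>n. G n A \<subseteq> W)"
      using gen
    proof (induction rule: generate_topology_on.induct)
      case Empty
      then show ?case by simp
    next
      case (Int a b)
      show ?case
      proof (intro allI impI)
        fix A assume "A \<in> a \<inter> b" "finite A" "A \<noteq> {}" "A \<subseteq> topspace X"
        then obtain n1 n2 where "G n1 A \<subseteq> a" "G n2 A \<subseteq> b" using Int.IH by blast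
        moreover have "G (n1+n2) A \<subseteq> G n1 A" "G (n1+n2) A \<subseteq> G n2 A"
          unfolding G_def by (intro vb_mono; use g4 in simp)+
        ultimately show "\<exists>n. G n A \<subseteq> a \<inter> b" by blast
      qed
    next
      case (UN K)
      show ?case
      proof (intro allI impI)
        fix A assume "A \<in> \<Union>K" "finite A" "A \<noteq> {}" "A \<subseteq> topspace X"
        then obtain k where "k \<in> K" "A \<in> k" by blast
        then obtain n where "G n A \<subseteq> k" using UN.IH \<open>finite A\<close> \<open>A \<noteq> {}\<close> \<open>A \<subseteq> topspace X\<close> by blast
        then show "\<exists>n. G n A \<subseteq> \<Union>K" using \<open>k \<in> K\<close> by blast
      qed
    next
      case (Basis s)
      then obtain \<U> where s: "s = vietoris_basic X \<U>" and U: "finite \<U>" "\<U> \<noteq> {}" "\<forall>U\<in>\<U>. openin X U"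
        by blast
      show ?case
      proof (intro allI impI)
        fix A assume As: "A \<in> s" and A: "finite A" "A \<noteq> {}" "A \<subseteq> topspace X"
        have "\<exists>n. g n a \<subseteq> \<Inter>(insert (topspace X) {U\<in>\<U>. a \<in> U})" if a: "a \<in> A" for a
        proof -
          have "openin X (\<Inter>(insert (topspace X) {U\<in>\<U>. a \<in> U}))"
            by (rule openin_Inter) (use U in auto)
          moreover have "a \<in> \<Inter>(insert (topspace X) {U\<in>\<U>. a \<in> U})" using a A by auto
          ultimately show ?thesis using g2 a A by blast
        qed
        then obtain nf where nf: "\<And>a. a \<in> A \<Longrightarrow> g (nf a) a \<subseteq> \<Inter>(insert (topspace X) {U\<in>\<U>. a \<in> U})"
          by metis
        define N where "N = (\<Sum>a\<in>A. nf a)"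
        have sub: "g N a \<subseteq> \<Inter>(insert (topspace X) {U\<in>\<U>. a \<in> U})" if "a \<in> A" for a
        proof -
          have "nf a \<le> N" unfolding N_def using that A by (intro member_le_sum) auto
          then show ?thesis using g4 nf[OF that] by blast
        qed
        have sub2: "g N a \<subseteq> U" if "a \<in> A" "U \<in> \<U>" "a \<in> U" for a U
        proof -
          have "\<Inter>(insert (topspace X) {U\<in>\<U>. a \<in> U}) \<subseteq> U" using that(2,3) by blast
          with sub[OF that(1)] show ?thesis by (rule order_trans)
        qed
        have "G N A \<subseteq> s"
        proof
          fix B assume "B \<in> G N A"
          then have B: "finite B" "B \<noteq> {}" "B \<subseteq> topspace X" "B \<subseteq> \<Union>(g N ` A)"
            and Bm: "\<forall>a\<in>A. B \<inter> g N a \<noteq> {}"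
            unfolding G_def mem_vb by auto
          have AU: "A \<subseteq> \<Union>\<U>" "\<forall>U\<in>\<U>. A \<inter> U \<noteq> {}" using As unfolding s mem_vb by auto
          have "B \<subseteq> \<Union>\<U>"
          proof
            fix b assume "b \<in> B"
            then obtain a where a: "a \<in> A" "b \<in> g N a" using B by blast
            then obtain U where U: "U \<in> \<U>" "a \<in> U" using AU by blast
            then show "b \<in> \<Union>\<U>" using sub2[OF a(1) U] a(2) by blast
          qed
          moreover have "B \<inter> U \<noteq> {}" if "U \<in> \<U>" for U
          proof -
            have "A \<inter> U \<noteq> {}" using AU(2) \<open>U \<in> \<U>\<close> by simp
            then obtain a where a: "a \<in> A" "a \<in> U" by blast
            have "g N a \<subseteq> U" by (rule sub2[OF a(1) that a(2)])
            then show ?thesis using Bm a by blast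
          qed
          ultimately show "B \<in> s" unfolding s mem_vb using B by auto
        qed
        then show "\<exists>n. G n A \<subseteq> s" by blast
      qed
    qed
    then show "\<exists>n. G n A \<subseteq> W" using A W by blast
  qed
  have P3: "\<forall>n. \<forall>A\<in>topspace (fin_vietoris X). \<exists>m. \<forall>B\<in>G m A. G n B \<subseteq> G n A"
  proof (intro allI ballI)
    fix n A assume "A \<in> topspace (fin_vietoris X)"
    then have A: "finite A" "A \<noteq> {}" "A \<subseteq> topspace X" using TS by auto
    define M where "M = (\<Sum>a\<in>A. mf n a)"
    have key: "g n b \<subseteq> g n a" if "a \<in> A" "b \<in> g M a" for a b
    proof -
      have "mf n a \<le> M" unfolding M_def using that A by (intro member_le_sum) auto
      then have "b \<in> g (mf n a) a" using g4 that by blast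
      then show ?thesis using mf[where n=n and x=a] that A by blast
    qed
    show "\<exists>m. \<forall>B\<in>G m A. G n B \<subseteq> G n A"
    proof (intro exI ballI subsetI)
      fix B C assume B: "B \<in> G M A" and C: "C \<in> G n B"
      have B': "B \<subseteq> \<Union>(g M ` A)" "\<forall>a\<in>A. B \<inter> g M a \<noteq> {}"
        using B unfolding G_def mem_vb by auto
      have C': "finite C" "C \<noteq> {}" "C \<subseteq> topspace X" "C \<subseteq> \<Union>(g n ` B)" "\<forall>b\<in>B. C \<inter> g n b \<noteq> {}"
        using C unfolding G_def mem_vb by auto
      have "C \<subseteq> \<Union>(g n ` A)"
      proof
        fix c assume "c \<in> C"
        then obtain b where b: "b \<in> B" "c \<in> g n b" using C' by blast
        then obtain a where "a \<in> A" "b \<in> g M a" using B' by blast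
        then show "c \<in> \<Union>(g n ` A)" using key b by blast
      qed
      moreover have "C \<inter> g n a \<noteq> {}" if "a \<in> A" for a
      proof -
        have "B \<inter> g M a \<noteq> {}" using B'(2) \<open>a \<in> A\<close> by simp
        then obtain b where "b \<in> B" "b \<in> g M a" by blast
        then show ?thesis using key[OF that] C' by blast
      qed
      ultimately show "C \<in> G n A" unfolding G_def mem_vb using C' by auto
    qed
  qed
  show ?thesis unfolding gamma_space_def by (intro exI[of _ G] conjI P1 P2 P3)
qed

lemma backward:
  assumes "gamma_space (fin_vietoris X)"
  shows "gamma_space X"
proof -
  obtain g :: "nat \<Rightarrow> 'a set \<Rightarrow> 'a set set" where
    g1: "\<forall>n. \<forall>x\<in>topspace (fin_vietoris X). openin (fin_vietoris X) (g n x) \<and> x \<in> g n x" and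
    g2: "\<forall>x\<in>topspace (fin_vietoris X). \<forall>U. openin (fin_vietoris X) U \<and> x \<in> U \<longrightarrow> (\<exists>n. g n x \<subseteq> U)" and
    g3: "\<forall>n. \<forall>x\<in>topspace (fin_vietoris X). \<exists>m. \<forall>y\<in>g m x. g n y \<subseteq> g n x"
    using assms unfolding gamma_space_def by (elim exE conjE) (rule that; assumption)
  note TS = topspace_fin_vietoris[of X]
  have sing: "{x} \<in> topspace (fin_vietoris X)" if "x \<in> topspace X" for x
    using TS that by auto
  have opn: "openin X {y \<in> topspace X. {y} \<in> W}" if "openin (fin_vietoris X) W" for W
  proof -
    have gen: "generate_topology_on {vietoris_basic X \<U> | \<U>. finite \<U> \<and> \<U> \<noteq> {} \<and> (\<forall>U\<in>\<U>. openin X U)} W"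
      using that unfolding fin_vietoris_def by (simp add: openin_topology_generated_by_iff)
    then show ?thesis
    proof (induction rule: generate_topology_on.induct)
      case Empty
      then show ?case by simp
    next
      case (Int a b)
      have "{y \<in> topspace X. {y} \<in> a \<inter> b} = {y \<in> topspace X. {y} \<in> a} \<inter> {y \<in> topspace X. {y} \<in> b}"
        by auto
      then show ?case using Int.IH by auto
    next
      case (UN K)
      have "{y \<in> topspace X. {y} \<in> \<Union>K} = (\<Union>k\<in>K. {y \<in> topspace X. {y} \<in> k})" by auto
      then show ?case using UN.IH by auto
    next
      case (Basis s)
      then obtain \<U> where s: "s = vietoris_basic X \<U>" and U: "finite \<U>" "\<U> \<noteq> {}" "\<forall>U\<in>\<U>. openin X U"
        by blast
      have "{y \<in> topspace X. {y} \<in> s} = \<Inter>(insert (topspace X) \<U>)"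
        unfolding s vietoris_basic_def using U(2) by auto
      moreover have "openin X (\<Inter>(insert (topspace X) \<U>))"
        by (rule openin_Inter) (use U in auto)
      ultimately show ?case by simp
    qed
  qed
  define h where "h n x = {y \<in> topspace X. {y} \<in> g n {x}}" for n x
  have "\<forall>n. \<forall>x\<in>topspace X. openin X (h n x) \<and> x \<in> h n x"
    unfolding h_def using g1 sing opn by blast
  moreover have "\<forall>x\<in>topspace X. \<forall>U. openin X U \<and> x \<in> U \<longrightarrow> (\<exists>n. h n x \<subseteq> U)"
  proof (intro ballI allI impI)
    fix x U assume x: "x \<in> topspace X" and U: "openin X U \<and> x \<in> U"
    have "openin (fin_vietoris X) (vietoris_basic X {U})"
      by (rule openin_fin_vietoris_basic) (use U in auto)
    moreover have "{x} \<in> vietoris_basic X {U}" unfolding vietoris_basic_def using x U by auto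
    ultimately obtain n where "g n {x} \<subseteq> vietoris_basic X {U}" using g2 sing[OF x] by blast
    then have "h n x \<subseteq> U" unfolding h_def vietoris_basic_def by auto
    then show "\<exists>n. h n x \<subseteq> U" by blast
  qed
  moreover have "\<forall>n. \<forall>x\<in>topspace X. \<exists>m. \<forall>y\<in>h m x. h n y \<subseteq> h n x"
  proof (intro allI ballI)
    fix n x assume x: "x \<in> topspace X"
    obtain m where m: "\<forall>y\<in>g m {x}. g n y \<subseteq> g n {x}" using g3 sing[OF x] by blast
    show "\<exists>m. \<forall>y\<in>h m x. h n y \<subseteq> h n x"
      by (rule exI[of _ m]) (use m in \<open>auto simp: h_def\<close>)
  qed
  ultimately show ?thesis unfolding gamma_space_def by (intro exI[of _ h]) (simp only:)
qed

theorem theorem4p10: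
  fixes X :: "'a topology"
  assumes "regular_space X" and "Hausdorff_space X"
  shows "gamma_space X \<longleftrightarrow> gamma_space (fin_vietoris X)"
  using forward backward by blast

end
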